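(* Let $S$ be a semigroup with a subsemigroup $T$ such that $S\setminus T$ is an ideal of $S$. (1) If $S$ is right ideal Howson then so is $T$. (2) If moreover $S\setminus T$ is finite, then $S$ is right ideal Howson if and only if $T$ is right ideal Howson.
   Context: A semigroup $S$ is right ideal Howson if the intersection of any two finitely generated right ideals of $S$ is finitely generated, where a right ideal $I$ is finitely generated if $I=XS^1$ for a finite $X\subseteq I$ ($S^1$ being $S$ if $S$ is a monoid and otherwise $S$ with an identity adjoined). *)

theory Defs
  imports Main
begin

definition semigroup_on :: "'a set \<Rightarrow> ('a \<Rightarrow> 'a \<Rightarrow> 'a) \<Rightarrow> bool" where
  "semigroup_on S f \<longleftrightarrow>
     (\<forall>x\<in>S. \<forall>y\<in>S. f x y \<in> S) \<and>
     (\<forall>x\<in>S. \<forall>y\<in>S. \<forall>z\<in>S. f (f x y) z = f x (f y z))"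

definition subsemigroup :: "'a set \<Rightarrow> 'a set \<Rightarrow> ('a \<Rightarrow> 'a \<Rightarrow> 'a) \<Rightarrow> bool" where
  "subsemigroup T S f \<longleftrightarrow> T \<subseteq> S \<and> (\<forall>x\<in>T. \<forall>y\<in>T. f x y \<in> T)"

definition right_ideal :: "'a set \<Rightarrow> ('a \<Rightarrow> 'a \<Rightarrow> 'a) \<Rightarrow> 'a set \<Rightarrow> bool" where
  "right_ideal S f I \<longleftrightarrow> I \<subseteq> S \<and> (\<forall>x\<in>I. \<forall>s\<in>S. f x s \<in> I)"

definition ideal_of :: "'a set \<Rightarrow> ('a \<Rightarrow> 'a \<Rightarrow> 'a) \<Rightarrow> 'a set \<Rightarrow> bool" where
  "ideal_of S f I \<longleftrightarrow> I \<subseteq> S \<and> (\<forall>x\<in>I. \<forall>s\<in>S. f x s \<in> I \<and> f s x \<in> I)"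

text \<open>X S^1 = X \<union> X S (this is also correct when S is a monoid, since then X \<subseteq> X S).\<close>
definition gen_right_ideal :: "'a set \<Rightarrow> ('a \<Rightarrow> 'a \<Rightarrow> 'a) \<Rightarrow> 'a set \<Rightarrow> 'a set" where
  "gen_right_ideal S f X = X \<union> {f x s | x s. x \<in> X \<and> s \<in> S}"

definition fg_right_ideal :: "'a set \<Rightarrow> ('a \<Rightarrow> 'a \<Rightarrow> 'a) \<Rightarrow> 'a set \<Rightarrow> bool" where
  "fg_right_ideal S f I \<longleftrightarrow> right_ideal S f I \<and>
     (\<exists>X. finite X \<and> X \<subseteq> I \<and> I = gen_right_ideal S f X)"

definition right_ideal_Howson :: "'a set \<Rightarrow> ('a \<Rightarrow> 'a \<Rightarrow> 'a) \<Rightarrow> bool" where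
  "right_ideal_Howson S f \<longleftrightarrow>
     (\<forall>I J. fg_right_ideal S f I \<and> fg_right_ideal S f J \<longrightarrow> fg_right_ideal S f (I \<inter> J))"

end

theory Submission
  imports Defs
begin

lemma gen_ri:
  assumes "semigroup_on S f" "X \<subseteq> S"
  shows "right_ideal S f (gen_right_ideal S f X)"
  unfolding right_ideal_def
proof (intro conjI ballI)
  show "gen_right_ideal S f X \<subseteq> S"
    using assms unfolding gen_right_ideal_def semigroup_on_def by blast
next
  fix x s assume x: "x \<in> gen_right_ideal S f X" and s: "s \<in> S"
  show "f x s \<in> gen_right_ideal S f X"
  proof (cases "x \<in> X")
    case True then show ?thesis using s unfolding gen_right_ideal_def by blast
  next
    case False
    then obtain a b where ab: "x = f a b" "a \<in> X" "b \<in> S" using x unfolding gen_right_ideal_def by blast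
    have "f x s = f a (f b s)" using ab s assms unfolding semigroup_on_def by blast
    moreover have "f b s \<in> S" using ab s assms unfolding semigroup_on_def by blast
    ultimately show ?thesis using ab unfolding gen_right_ideal_def by blast
  qed
qed

lemma sub_semi:
  assumes "semigroup_on S f" "subsemigroup T S f"
  shows "semigroup_on T f"
  using assms unfolding semigroup_on_def subsemigroup_def by blast

lemma gen_int:
  assumes "subsemigroup T S f" "ideal_of S f (S - T)" "X \<subseteq> S"
  shows "gen_right_ideal S f X \<inter> T = gen_right_ideal T f (X \<inter> T)"
proof
  show "gen_right_ideal S f X \<inter> T \<subseteq> gen_right_ideal T f (X \<inter> T)"
  proof
    fix y assume y: "y \<in> gen_right_ideal S f X \<inter> T"
    show "y \<in> gen_right_ideal T f (X \<inter> T)"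
    proof (cases "y \<in> X")
      case True then show ?thesis using y unfolding gen_right_ideal_def by auto
    next
      case False
      then obtain x s where xs: "y = f x s" "x \<in> X" "s \<in> S" using y unfolding gen_right_ideal_def by auto
      have "x \<in> T" using assms xs y unfolding ideal_of_def by auto
      moreover have "s \<in> T" using assms xs y unfolding ideal_of_def by auto
      ultimately show ?thesis using xs unfolding gen_right_ideal_def by auto
    qed
  qed
next
  show "gen_right_ideal T f (X \<inter> T) \<subseteq> gen_right_ideal S f X \<inter> T"
    using assms unfolding gen_right_ideal_def subsemigroup_def by blast
qed

lemma ri_int:
  "right_ideal S f I \<Longrightarrow> right_ideal S f J \<Longrightarrow> right_ideal S f (I \<inter> J)"
  unfolding right_ideal_def by blast

lemma ri_T:
  assumes "subsemigroup T S f" "right_ideal S f I"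
  shows "right_ideal T f (I \<inter> T)"
  using assms unfolding right_ideal_def subsemigroup_def by blast

lemma gen_sub: "X \<subseteq> gen_right_ideal S f X"
  unfolding gen_right_ideal_def by (rule Un_upper1)

lemma part1:
  assumes sg: "semigroup_on S f" and sub: "subsemigroup T S f" and id: "ideal_of S f (S - T)"
    and H: "right_ideal_Howson S f"
  shows "right_ideal_Howson T f"
  unfolding right_ideal_Howson_def
proof (intro allI impI)
  fix I J assume "fg_right_ideal T f I \<and> fg_right_ideal T f J"
  then obtain X Y where I: "right_ideal T f I" "finite X" "X \<subseteq> I" "I = gen_right_ideal T f X"
    and J: "right_ideal T f J" "finite Y" "Y \<subseteq> J" "J = gen_right_ideal T f Y"
    unfolding fg_right_ideal_def by blast
  have TS: "T \<subseteq> S" using sub unfolding subsemigroup_def by auto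
  have XT: "X \<subseteq> T" "Y \<subseteq> T" using I J unfolding right_ideal_def by auto
  have fI: "fg_right_ideal S f (gen_right_ideal S f X)"
    unfolding fg_right_ideal_def using gen_ri[OF sg, of X] XT TS I(2) gen_sub[of X S f]
    by blast
  have fJ: "fg_right_ideal S f (gen_right_ideal S f Y)"
    unfolding fg_right_ideal_def using gen_ri[OF sg, of Y] XT TS J(2) gen_sub[of Y S f]
    by blast
  have eI: "gen_right_ideal S f X \<inter> T = I"
  proof -
    have a: "X \<subseteq> S" using XT TS by blast
    have b: "X \<inter> T = X" using XT by blast
    have "gen_right_ideal S f X \<inter> T = gen_right_ideal T f (X \<inter> T)" by (rule gen_int[OF sub id a])
    also have "\<dots> = gen_right_ideal T f X" by (simp only: b)
    finally show ?thesis using I(4) by simp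
  qed
  have eJ: "gen_right_ideal S f Y \<inter> T = J"
  proof -
    have a: "Y \<subseteq> S" using XT TS by blast
    have b: "Y \<inter> T = Y" using XT by blast
    have "gen_right_ideal S f Y \<inter> T = gen_right_ideal T f (Y \<inter> T)" by (rule gen_int[OF sub id a])
    also have "\<dots> = gen_right_ideal T f Y" by (simp only: b)
    finally show ?thesis using J(4) by simp
  qed
  have "fg_right_ideal S f (gen_right_ideal S f X \<inter> gen_right_ideal S f Y)"
    using H fI fJ unfolding right_ideal_Howson_def by blast
  then obtain Z where Z: "finite Z" "Z \<subseteq> gen_right_ideal S f X \<inter> gen_right_ideal S f Y"
    "gen_right_ideal S f X \<inter> gen_right_ideal S f Y = gen_right_ideal S f Z"
    unfolding fg_right_ideal_def by blast
  have ZS: "Z \<subseteq> S" using Z(2) fI unfolding fg_right_ideal_def right_ideal_def by blast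
  have eq: "I \<inter> J = gen_right_ideal T f (Z \<inter> T)"
  proof -
    have "I \<inter> J = (gen_right_ideal S f X \<inter> gen_right_ideal S f Y) \<inter> T"
      using eI eJ by blast
    also have "\<dots> = gen_right_ideal S f Z \<inter> T" using Z(3) by simp
    also have "\<dots> = gen_right_ideal T f (Z \<inter> T)" by (rule gen_int[OF sub id ZS])
    finally show ?thesis .
  qed
  show "fg_right_ideal T f (I \<inter> J)"
    unfolding fg_right_ideal_def
  proof (intro conjI exI)
    show "right_ideal T f (I \<inter> J)" using ri_int I(1) J(1) .
    show "finite (Z \<inter> T)" using Z(1) by simp
    show "Z \<inter> T \<subseteq> I \<inter> J" using eq gen_sub[of "Z \<inter> T" T f] by simp
    show "I \<inter> J = gen_right_ideal T f (Z \<inter> T)" by (rule eq)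
  qed
qed

lemma part2:
  assumes sg: "semigroup_on S f" and sub: "subsemigroup T S f" and id: "ideal_of S f (S - T)"
    and fin: "finite (S - T)" and H: "right_ideal_Howson T f"
  shows "right_ideal_Howson S f"
  unfolding right_ideal_Howson_def
proof (intro allI impI)
  fix I J assume "fg_right_ideal S f I \<and> fg_right_ideal S f J"
  then obtain X Y where I: "right_ideal S f I" "finite X" "X \<subseteq> I" "I = gen_right_ideal S f X"
    and J: "right_ideal S f J" "finite Y" "Y \<subseteq> J" "J = gen_right_ideal S f Y"
    unfolding fg_right_ideal_def by blast
  have sgT: "semigroup_on T f" by (rule sub_semi[OF sg sub])
  have XS: "X \<subseteq> S" "Y \<subseteq> S" using I J unfolding right_ideal_def by auto
  have eI: "I \<inter> T = gen_right_ideal T f (X \<inter> T)" using gen_int[OF sub id XS(1)] I(4) by simp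
  have eJ: "J \<inter> T = gen_right_ideal T f (Y \<inter> T)" using gen_int[OF sub id XS(2)] J(4) by simp
  have fI: "fg_right_ideal T f (I \<inter> T)"
    unfolding fg_right_ideal_def using ri_T[OF sub I(1)] eI I(2,3)
    by (auto simp: gen_right_ideal_def)
  have fJ: "fg_right_ideal T f (J \<inter> T)"
    unfolding fg_right_ideal_def using ri_T[OF sub J(1)] eJ J(2,3)
    by (auto simp: gen_right_ideal_def)
  have "fg_right_ideal T f (I \<inter> T \<inter> (J \<inter> T))"
    using H fI fJ unfolding right_ideal_Howson_def by blast
  then obtain Z where Z: "finite Z" "Z \<subseteq> I \<inter> T \<inter> (J \<inter> T)"
    "I \<inter> T \<inter> (J \<inter> T) = gen_right_ideal T f Z"
    unfolding fg_right_ideal_def by blast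
  define W where "W = Z \<union> ((I \<inter> J) - T)"
  have riIJ: "right_ideal S f (I \<inter> J)" using ri_int I(1) J(1) .
  have "I \<inter> J - T \<subseteq> S - T" using riIJ unfolding right_ideal_def by blast
  then have "finite (I \<inter> J - T)" using fin finite_subset by blast
  then have finW: "finite W" unfolding W_def using Z(1) by simp
  have WIJ: "W \<subseteq> I \<inter> J" unfolding W_def using Z(2) by blast
  have eq: "I \<inter> J = gen_right_ideal S f W"
  proof
    show "gen_right_ideal S f W \<subseteq> I \<inter> J"
      using WIJ riIJ unfolding gen_right_ideal_def right_ideal_def by blast
  next
    show "I \<inter> J \<subseteq> gen_right_ideal S f W"
    proof
      fix y assume y: "y \<in> I \<inter> J"
      show "y \<in> gen_right_ideal S f W"
      proof (cases "y \<in> T")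
        case True
        then have "y \<in> gen_right_ideal T f Z" using Z(3) y by blast
        then show ?thesis using sub unfolding gen_right_ideal_def W_def subsemigroup_def by blast
      next
        case False then show ?thesis using y unfolding gen_right_ideal_def W_def by blast
      qed
    qed
  qed
  show "fg_right_ideal S f (I \<inter> J)"
    unfolding fg_right_ideal_def using riIJ finW WIJ eq by blast
qed

theorem mainTheorem18:
  fixes S T :: "'a set" and f :: "'a \<Rightarrow> 'a \<Rightarrow> 'a"
  assumes "semigroup_on S f"
    and "subsemigroup T S f"
    and "ideal_of S f (S - T)"
  shows "(right_ideal_Howson S f \<longrightarrow> right_ideal_Howson T f) \<and>
         (finite (S - T) \<longrightarrow> (right_ideal_Howson S f \<longleftrightarrow> right_ideal_Howson T f))"
  using part1[OF assms] part2[OF assms] by blast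

end
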